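(* Let $\Phi$ be a commutative ring with unity, $\Delta=\{\delta_1,\ldots,\delta_m\}$ a basic set of derivation operators, $A=\Phi\{x_1,\ldots,x_n\}$, and let $I$ be the differential ideal of $A$ generated by $f_1,\ldots,f_r\in A$. Let $B=\Phi\{x_1,\ldots,x_n,t\}$ with one more differential variable $t$, and identify $A$ with the corresponding differential subalgebra of $B$. Let $S_I$ be the differential subalgebra of $B$ generated by $$x_1,\ldots,x_n,\ \delta_1(t),\ldots,\delta_m(t),\ tf_1,\ldots,tf_r.$$ Then for every $f\in A$: $f\in I$ if and only if $tf\in S_I$.
   Context: $\Phi$ is regarded as a differential ring with all $\delta_l$ acting as zero. The differential polynomial ring $\Phi\{y_1,\ldots,y_k\}$ is the polynomial ring over $\Phi$ in the algebraically independent variables $\theta(y_i)$, where $\theta=\delta_1^{j_1}\cdots\delta_m^{j_m}$ ranges over the free commutative monoid generated by $\Delta$, with each $\delta_l$ the derivation determined by $\delta_l(\theta(y_i))=(\delta_l\theta)(y_i)$, $\delta_l(\Phi)=0$. A differential ideal is an ideal closed under all $\delta_l$; the differential subalgebra generated by a set is the smallest $\Phi$-subalgebra with unity containing it and closed under all $\delta_l$. *)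

theory Defs
  imports Main "HOL-Library.Poly_Mapping"
begin

text \<open>Differential variables theta(y_i) are pairs (i, theta), where theta is a
finitely supported exponent vector (key l stands for delta_(l+1)).\<close>

type_synonym dvar = "nat \<times> (nat \<Rightarrow>\<^sub>0 nat)"
type_synonym 'a dpoly = "(dvar \<Rightarrow>\<^sub>0 nat) \<Rightarrow>\<^sub>0 'a"

definition dX :: "nat \<Rightarrow> (nat \<Rightarrow>\<^sub>0 nat) \<Rightarrow> 'a::comm_ring_1 dpoly" where
  "dX i \<theta> = Poly_Mapping.single (Poly_Mapping.single (i, \<theta>) 1) 1"

definition dconst :: "'a::comm_ring_1 \<Rightarrow> 'a dpoly" where
  "dconst c = Poly_Mapping.single 0 c"

definition dring :: "nat \<Rightarrow> nat \<Rightarrow> 'a::comm_ring_1 dpoly set" where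
  "dring m k = {p. \<forall>mon\<in>Poly_Mapping.keys (p :: 'a dpoly). \<forall>v\<in>Poly_Mapping.keys mon. fst v < k \<and> Poly_Mapping.keys (snd v) \<subseteq> {..<m}}"

text \<open>The derivation delta_l: Phi-linear, Leibniz rule, and
delta_l(theta(y_i)) = (delta_l theta)(y_i).\<close>
definition dderiv :: "nat \<Rightarrow> 'a::comm_ring_1 dpoly \<Rightarrow> 'a dpoly" where
  "dderiv l p = (\<Sum>mon\<in>Poly_Mapping.keys (p :: 'a dpoly). \<Sum>v\<in>Poly_Mapping.keys mon.
      Poly_Mapping.single (mon - Poly_Mapping.single v 1)
        (Poly_Mapping.lookup p mon * of_nat (Poly_Mapping.lookup mon v))
      * dX (fst v) (snd v + Poly_Mapping.single l 1))"

inductive_set diff_ideal :: "nat \<Rightarrow> nat \<Rightarrow> 'a::comm_ring_1 dpoly set \<Rightarrow> 'a dpoly set"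
  for m k F where
  gen: "f \<in> F \<Longrightarrow> f \<in> diff_ideal m k F"
| zero: "0 \<in> diff_ideal m k F"
| add: "a \<in> diff_ideal m k F \<Longrightarrow> b \<in> diff_ideal m k F \<Longrightarrow> a + b \<in> diff_ideal m k F"
| mult: "a \<in> diff_ideal m k F \<Longrightarrow> r \<in> dring m k \<Longrightarrow> r * a \<in> diff_ideal m k F"
| deriv: "a \<in> diff_ideal m k F \<Longrightarrow> l < m \<Longrightarrow> dderiv l a \<in> diff_ideal m k F"

inductive_set diff_subalg :: "nat \<Rightarrow> 'a::comm_ring_1 dpoly set \<Rightarrow> 'a dpoly set"
  for m G where
  gen: "g \<in> G \<Longrightarrow> g \<in> diff_subalg m G"
| const: "dconst c \<in> diff_subalg m G"
| add: "a \<in> diff_subalg m G \<Longrightarrow> b \<in> diff_subalg m G \<Longrightarrow> a + b \<in> diff_subalg m G"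
| mult: "a \<in> diff_subalg m G \<Longrightarrow> b \<in> diff_subalg m G \<Longrightarrow> a * b \<in> diff_subalg m G"
| deriv: "a \<in> diff_subalg m G \<Longrightarrow> l < m \<Longrightarrow> dderiv l a \<in> diff_subalg m G"

end

theory Submission imports Defs begin

lemma sum_single: "(p::'a \<Rightarrow>\<^sub>0 'b::comm_monoid_add) = (\<Sum>k\<in>Poly_Mapping.keys p. Poly_Mapping.single k (Poly_Mapping.lookup p k))"
proof (rule poly_mapping_eqI)
  fix x
  have "Poly_Mapping.lookup (\<Sum>k\<in>Poly_Mapping.keys p. Poly_Mapping.single k (Poly_Mapping.lookup p k)) x
     = (\<Sum>k\<in>Poly_Mapping.keys p. (Poly_Mapping.lookup p k when k = x))"
    by (simp add: lookup_sum lookup_single)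
  also have "\<dots> = Poly_Mapping.lookup p x"
  proof (cases "x \<in> Poly_Mapping.keys p")
    case True
    then show ?thesis
      by (subst sum.remove[OF finite_keys True]) (auto intro!: sum.neutral simp: when_def)
  next
    case False
    then show ?thesis by (auto intro!: sum.neutral simp: when_def in_keys_iff)
  qed
  finally show "Poly_Mapping.lookup p x = Poly_Mapping.lookup (\<Sum>k\<in>Poly_Mapping.keys p. Poly_Mapping.single k (Poly_Mapping.lookup p k)) x" ..
qed

lemma poly_induct[case_names zero single add]:
  assumes "P 0" "\<And>a c. P (Poly_Mapping.single a c)" "\<And>p q. P p \<Longrightarrow> P q \<Longrightarrow> P (p + q)"
  shows "P (p::'a \<Rightarrow>\<^sub>0 'b::comm_monoid_add)"
proof -
  have "\<And>K. finite K \<Longrightarrow> P (\<Sum>k\<in>K. Poly_Mapping.single k (Poly_Mapping.lookup p k))"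
  proof -
    fix K :: "'a set" assume "finite K"
    then show "P (\<Sum>k\<in>K. Poly_Mapping.single k (Poly_Mapping.lookup p k))"
      by (induction K rule: finite_induct) (auto intro: assms)
  qed
  then show ?thesis by (subst sum_single) simp
qed

lemma keysum_ext:
  assumes "finite K" "Poly_Mapping.keys p \<subseteq> K" "\<And>k. g k 0 = 0"
  shows "(\<Sum>k\<in>Poly_Mapping.keys p. g k (Poly_Mapping.lookup p k)) = (\<Sum>k\<in>K. g k (Poly_Mapping.lookup p k))"
  by (rule sum.mono_neutral_left) (use assms in \<open>auto simp: in_keys_iff\<close>)

lemma keysum_add:
  fixes g :: "'a \<Rightarrow> 'b::comm_monoid_add \<Rightarrow> 'c::comm_monoid_add"
  assumes "\<And>k. g k 0 = 0" "\<And>k a b. g k (a + b) = g k a + g k b"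
  shows "(\<Sum>k\<in>Poly_Mapping.keys (p+q). g k (Poly_Mapping.lookup (p+q) k))
     = (\<Sum>k\<in>Poly_Mapping.keys p. g k (Poly_Mapping.lookup p k)) + (\<Sum>k\<in>Poly_Mapping.keys q. g k (Poly_Mapping.lookup q k))"
proof -
  let ?K = "Poly_Mapping.keys p \<union> Poly_Mapping.keys q"
  have f: "finite ?K" by simp
  have "(\<Sum>k\<in>Poly_Mapping.keys (p+q). g k (Poly_Mapping.lookup (p+q) k)) = (\<Sum>k\<in>?K. g k (Poly_Mapping.lookup (p+q) k))"
    by (rule keysum_ext[OF f keys_add, of g, OF assms(1)])
  also have "\<dots> = (\<Sum>k\<in>?K. g k (Poly_Mapping.lookup p k)) + (\<Sum>k\<in>?K. g k (Poly_Mapping.lookup q k))"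
    by (simp add: lookup_add assms(2) sum.distrib)
  also have "\<dots> = (\<Sum>k\<in>Poly_Mapping.keys p. g k (Poly_Mapping.lookup p k)) + (\<Sum>k\<in>Poly_Mapping.keys q. g k (Poly_Mapping.lookup q k))"
    using keysum_ext[where K="?K" and p=p and g=g, OF f _ assms(1)] keysum_ext[where K="?K" and p=q and g=g, OF f _ assms(1)] by auto
  finally show ?thesis .
qed

lemma keysum_single:
  assumes "\<And>k. g k 0 = 0"
  shows "(\<Sum>k\<in>Poly_Mapping.keys (Poly_Mapping.single a c). g k (Poly_Mapping.lookup (Poly_Mapping.single a c) k)) = g a c"
  using assms by auto

definition nv :: "nat \<Rightarrow> dvar \<Rightarrow> dvar" where "nv l v = (fst v, snd v + Poly_Mapping.single l 1)"

lemma dderiv_add: "dderiv l (p + q) = dderiv l p + dderiv l q"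
  unfolding dderiv_def
  by (rule keysum_add) (simp_all add: single_add distrib_right sum.distrib)

lemma dderiv_zero[simp]: "dderiv l 0 = 0"
  by (simp add: dderiv_def)

lemma dderiv_single: "dderiv l (Poly_Mapping.single a c :: 'a::comm_ring_1 dpoly) =
   (\<Sum>v\<in>Poly_Mapping.keys a. Poly_Mapping.single (a - Poly_Mapping.single v 1 + Poly_Mapping.single (nv l v) 1) (c * of_nat (Poly_Mapping.lookup a v)))"
  unfolding dderiv_def
  by (subst keysum_single) (simp_all add: dX_def mult_single nv_def)

lemma dderiv_uminus: "dderiv l (- p) = - dderiv l p"
proof -
  have "dderiv l p + dderiv l (-p) = 0" using dderiv_add[of l p "-p"] by simp
  then show ?thesis by (metis minus_unique)
qed

lemma keys_add_nat: "Poly_Mapping.keys (a + b :: 'x \<Rightarrow>\<^sub>0 nat) = Poly_Mapping.keys a \<union> Poly_Mapping.keys b"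
  by (auto simp: in_keys_iff lookup_add)

lemma leibniz_term:
  fixes a b :: "dvar \<Rightarrow>\<^sub>0 nat" and c d :: "'a::comm_ring_1"
  shows "Poly_Mapping.single (a + b - Poly_Mapping.single v 1 + w) (c * d * of_nat (Poly_Mapping.lookup a v + Poly_Mapping.lookup b v))
     = Poly_Mapping.single (a - Poly_Mapping.single v 1 + w + b) (c * of_nat (Poly_Mapping.lookup a v) * d)
     + Poly_Mapping.single (a + (b - Poly_Mapping.single v 1 + w)) (c * d * of_nat (Poly_Mapping.lookup b v))"
proof -
  have e1: "a + b - Poly_Mapping.single v 1 + w = a - Poly_Mapping.single v 1 + w + b" if "Poly_Mapping.lookup a v \<noteq> 0"
    using that by (intro poly_mapping_eqI) (auto simp: lookup_add lookup_minus lookup_single when_def)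
  have e2: "a + b - Poly_Mapping.single v 1 + w = a + (b - Poly_Mapping.single v 1 + w)" if "Poly_Mapping.lookup b v \<noteq> 0"
    using that by (intro poly_mapping_eqI) (auto simp: lookup_add lookup_minus lookup_single when_def)
  show ?thesis
  proof (cases "Poly_Mapping.lookup a v = 0")
    case True
    then show ?thesis
    proof (cases "Poly_Mapping.lookup b v = 0")
      case True2: True
      then show ?thesis using True by simp
    next
      case False
      then show ?thesis using True e2 by simp
    qed
  next
    case False
    then show ?thesis
    proof (cases "Poly_Mapping.lookup b v = 0")
      case True
      then show ?thesis using False e1 by (simp add: ac_simps)
    next
      case F2: False
      then show ?thesis using False e1 e2
        by (simp add: single_add[symmetric] distrib_left distrib_right ac_simps)
    qed
  qed
qed

lemma leibniz_single:
  "dderiv l (Poly_Mapping.single a c * Poly_Mapping.single b d :: 'a::comm_ring_1 dpoly)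
   = dderiv l (Poly_Mapping.single a c) * Poly_Mapping.single b d + Poly_Mapping.single a c * dderiv l (Poly_Mapping.single b d)"
proof -
  let ?K = "Poly_Mapping.keys a \<union> Poly_Mapping.keys b"
  let ?w = "\<lambda>v. Poly_Mapping.single (nv l v) (1::nat)"
  have L: "dderiv l (Poly_Mapping.single a c * Poly_Mapping.single b d) =
    (\<Sum>v\<in>?K. Poly_Mapping.single (a + b - Poly_Mapping.single v 1 + ?w v) (c * d * of_nat (Poly_Mapping.lookup a v + Poly_Mapping.lookup b v)))"
    by (simp add: mult_single dderiv_single keys_add_nat lookup_add)
  have R1: "dderiv l (Poly_Mapping.single a c) * Poly_Mapping.single b d =
    (\<Sum>v\<in>?K. Poly_Mapping.single (a - Poly_Mapping.single v 1 + ?w v + b) (c * of_nat (Poly_Mapping.lookup a v) * d))"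
    by (simp add: dderiv_single sum_distrib_right mult_single)
       (rule sum.mono_neutral_left, auto simp: in_keys_iff)
  have R2: "Poly_Mapping.single a c * dderiv l (Poly_Mapping.single b d) =
    (\<Sum>v\<in>?K. Poly_Mapping.single (a + (b - Poly_Mapping.single v 1 + ?w v)) (c * d * of_nat (Poly_Mapping.lookup b v)))"
    by (simp add: dderiv_single sum_distrib_left mult_single mult.assoc)
       (rule sum.mono_neutral_left, auto simp: in_keys_iff)
  show ?thesis unfolding L R1 R2 sum.distrib[symmetric]
    by (rule sum.cong[OF refl], rule leibniz_term)
qed

lemma leibniz: "dderiv l (p * q :: 'a::comm_ring_1 dpoly) = dderiv l p * q + p * dderiv l q"
proof (induction p rule: poly_induct)
  case zero then show ?case by simp
next
  case (add p1 p2) then show ?case by (simp add: distrib_right dderiv_add algebra_simps)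
next
  case (single a c)
  show ?case
  proof (induction q rule: poly_induct)
    case zero then show ?case by simp
  next
    case (add q1 q2) then show ?case by (simp add: distrib_left dderiv_add algebra_simps)
  next
    case (single b d) then show ?case by (rule leibniz_single)
  qed
qed


definition tf :: "nat \<Rightarrow> (dvar \<Rightarrow>\<^sub>0 nat) \<Rightarrow> bool" where
  "tf n mon = (\<forall>v\<in>Poly_Mapping.keys mon. fst v \<noteq> n)"
definition t1 :: "nat \<Rightarrow> (dvar \<Rightarrow>\<^sub>0 nat) \<Rightarrow> bool" where
  "t1 n mon = (Poly_Mapping.lookup mon (n, 0) = 1 \<and> (\<forall>v\<in>Poly_Mapping.keys mon. fst v = n \<longrightarrow> v = (n, 0)))"
abbreviation T :: "nat \<Rightarrow> dvar \<Rightarrow>\<^sub>0 nat" where "T n \<equiv> Poly_Mapping.single (n, 0) 1"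

definition Eop :: "nat \<Rightarrow> 'a::comm_ring_1 dpoly \<Rightarrow> 'a dpoly" where
  "Eop n p = (\<Sum>mon\<in>Poly_Mapping.keys p. if tf n mon then Poly_Mapping.single mon (Poly_Mapping.lookup p mon) else 0)"
definition Cop :: "nat \<Rightarrow> 'a::comm_ring_1 dpoly \<Rightarrow> 'a dpoly" where
  "Cop n p = (\<Sum>mon\<in>Poly_Mapping.keys p. if t1 n mon then Poly_Mapping.single (mon - T n) (Poly_Mapping.lookup p mon) else 0)"

lemma Eop_add: "Eop n (p + q) = Eop n p + Eop n q"
  unfolding Eop_def by (rule keysum_add) (simp_all add: single_add)
lemma Cop_add: "Cop n (p + q) = Cop n p + Cop n q"
  unfolding Cop_def by (rule keysum_add) (simp_all add: single_add)
lemma Eop_zero[simp]: "Eop n 0 = 0" by (simp add: Eop_def)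
lemma Cop_zero[simp]: "Cop n 0 = 0" by (simp add: Cop_def)
lemma Eop_single: "Eop n (Poly_Mapping.single a c) = (if tf n a then Poly_Mapping.single a c else 0)"
  unfolding Eop_def by (subst keysum_single) auto
lemma Cop_single: "Cop n (Poly_Mapping.single a c) = (if t1 n a then Poly_Mapping.single (a - T n) c else 0)"
  unfolding Cop_def by (subst keysum_single) auto

lemma additive_sum:
  assumes "\<And>p q. L (p + q) = L p + L q" "L 0 = 0"
  shows "L (sum f K) = (\<Sum>k\<in>K. L (f k))"
proof (cases "finite K")
  case True then show ?thesis by (induction K rule: finite_induct) (simp_all add: assms)
qed (simp add: assms)

lemma tf_add: "tf n (a + b) \<longleftrightarrow> tf n a \<and> tf n b"
  by (auto simp: tf_def keys_add_nat)

lemma t1_tf: "t1 n a \<Longrightarrow> \<not> tf n a"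
  unfolding t1_def tf_def by (metis fst_conv in_keys_iff zero_neq_one)

lemma tf_lookup: "tf n a \<Longrightarrow> Poly_Mapping.lookup a (n, x) = 0"
  unfolding tf_def by (metis fst_conv in_keys_iff)

lemma t1_add: "t1 n (a + b) \<longleftrightarrow> (t1 n a \<and> tf n b) \<or> (tf n a \<and> t1 n b)"
proof
  assume h: "t1 n (a + b)"
  then have s: "Poly_Mapping.lookup a (n,0) + Poly_Mapping.lookup b (n,0) = 1"
    and k: "\<And>v. v \<in> Poly_Mapping.keys a \<union> Poly_Mapping.keys b \<Longrightarrow> fst v = n \<Longrightarrow> v = (n,0)"
    by (auto simp: t1_def keys_add_nat lookup_add)
  show "(t1 n a \<and> tf n b) \<or> (tf n a \<and> t1 n b)"
  proof (cases "Poly_Mapping.lookup a (n,0) = 1")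
    case True
    then have "Poly_Mapping.lookup b (n,0) = 0" using s by simp
    then have "tf n b" unfolding tf_def using k by (metis Un_iff in_keys_iff)
    moreover have "t1 n a" unfolding t1_def using True k by blast
    ultimately show ?thesis by blast
  next
    case False
    then have a0: "Poly_Mapping.lookup a (n,0) = 0" and "Poly_Mapping.lookup b (n,0) = 1" using s by linarith+
    then have "t1 n b" unfolding t1_def using k by blast
    moreover have "tf n a" unfolding tf_def using k a0 by (metis Un_iff in_keys_iff)
    ultimately show ?thesis by blast
  qed
next
  assume "(t1 n a \<and> tf n b) \<or> (tf n a \<and> t1 n b)"
  then show "t1 n (a + b)"
    by (auto simp: t1_def tf_def keys_add_nat lookup_add tf_lookup[unfolded tf_def])
qed


lemma t1_lookup: "t1 n a \<Longrightarrow> Poly_Mapping.lookup a (n, 0) = 1" by (simp add: t1_def)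

lemma sub_add_left: "Poly_Mapping.lookup a v \<noteq> 0 \<Longrightarrow> (a + b) - Poly_Mapping.single v 1 = (a - Poly_Mapping.single v 1) + (b :: 'x \<Rightarrow>\<^sub>0 nat)"
  by (intro poly_mapping_eqI) (auto simp: lookup_add lookup_minus lookup_single when_def)
lemma sub_add_right: "Poly_Mapping.lookup b v \<noteq> 0 \<Longrightarrow> (a + b) - Poly_Mapping.single v 1 = a + (b - Poly_Mapping.single v 1 :: 'x \<Rightarrow>\<^sub>0 nat)"
  by (intro poly_mapping_eqI) (auto simp: lookup_add lookup_minus lookup_single when_def)

lemma Eop_mult_single: "Eop n (Poly_Mapping.single a c * Poly_Mapping.single b d :: 'a::comm_ring_1 dpoly) = Eop n (Poly_Mapping.single a c) * Eop n (Poly_Mapping.single b d)"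
  by (simp add: Eop_single mult_single tf_add)

lemma Cop_mult_single: "Cop n (Poly_Mapping.single a c * Poly_Mapping.single b d :: 'a::comm_ring_1 dpoly)
  = Eop n (Poly_Mapping.single a c) * Cop n (Poly_Mapping.single b d) + Eop n (Poly_Mapping.single b d) * Cop n (Poly_Mapping.single a c)"
proof (cases "t1 n (a + b)")
  case True
  then consider "t1 n a" "tf n b" | "tf n a" "t1 n b" using t1_add by blast
  then show ?thesis
  proof cases
    case 1
    then have "\<not> tf n a" "\<not> t1 n b" using t1_tf by (auto simp: t1_def tf_lookup)
    moreover have "a + b - T n = b + (a - T n)"
      using sub_add_left[of a "(n,0)" b] t1_lookup[OF 1(1)] by (simp add: add.commute)
    ultimately show ?thesis using 1 True
      by (simp add: Eop_single Cop_single mult_single mult.commute)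
  next
    case 2
    then have "\<not> tf n b" "\<not> t1 n a" using t1_tf by (auto simp: t1_def tf_lookup)
    moreover have "a + b - T n = a + (b - T n)"
      using sub_add_right[of b "(n,0)" a] t1_lookup[OF 2(2)] by simp
    ultimately show ?thesis using 2 True
      by (simp add: Eop_single Cop_single mult_single)
  qed
next
  case False
  then show ?thesis using t1_add[of n a b] by (auto simp: Eop_single Cop_single mult_single)
qed

lemma Eop_mult: "Eop n (p * q :: 'a::comm_ring_1 dpoly) = Eop n p * Eop n q"
proof (induction p rule: poly_induct)
  case zero then show ?case by simp
next
  case (add p1 p2) then show ?case by (simp add: distrib_right Eop_add)
next
  case (single a c)
  show ?case
  proof (induction q rule: poly_induct)
    case zero then show ?case by simp
  next
    case (add q1 q2) then show ?case by (simp add: distrib_left Eop_add)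
  next
    case (single b d) then show ?case by (rule Eop_mult_single)
  qed
qed

lemma Cop_mult: "Cop n (p * q :: 'a::comm_ring_1 dpoly) = Eop n p * Cop n q + Eop n q * Cop n p"
proof (induction p rule: poly_induct)
  case zero then show ?case by simp
next
  case (add p1 p2) then show ?case by (simp add: distrib_right distrib_left Eop_add Cop_add algebra_simps)
next
  case (single a c)
  show ?case
  proof (induction q rule: poly_induct)
    case zero then show ?case by simp
  next
    case (add q1 q2) then show ?case by (simp add: distrib_right distrib_left Eop_add Cop_add algebra_simps)
  next
    case (single b d) then show ?case by (rule Cop_mult_single)
  qed
qed


lemma nv_ne: "nv l v \<noteq> (n, 0)"
proof
  assume "nv l v = (n, 0)"
  then have "snd v + Poly_Mapping.single l 1 = 0" by (simp add: nv_def)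
  then have "Poly_Mapping.lookup (snd v + Poly_Mapping.single l 1) l = 0" by simp
  then show False by (simp add: lookup_add)
qed

lemma fst_nv[simp]: "fst (nv l v) = fst v" by (simp add: nv_def)

lemma lookup_D: "Poly_Mapping.lookup (a - Poly_Mapping.single v i + Poly_Mapping.single w j) u
   = Poly_Mapping.lookup a u - (if u = v then i else 0) + (if u = w then j else 0)"
  by (simp add: lookup_add lookup_minus lookup_single when_def)

lemma tf_dterm:
  assumes "v \<in> Poly_Mapping.keys a"
  shows "tf n (a - Poly_Mapping.single v 1 + Poly_Mapping.single (nv l v) 1) \<longleftrightarrow> tf n a"
proof
  assume h: "tf n (a - Poly_Mapping.single v 1 + Poly_Mapping.single (nv l v) 1)"
  have "nv l v \<in> Poly_Mapping.keys (a - Poly_Mapping.single v 1 + Poly_Mapping.single (nv l v) 1)"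
    by (simp add: in_keys_iff lookup_D)
  then have fv: "fst v \<noteq> n" using h by (fastforce simp: tf_def)
  show "tf n a" unfolding tf_def
  proof
    fix u assume u: "u \<in> Poly_Mapping.keys a"
    show "fst u \<noteq> n"
    proof (cases "u = v")
      case True then show ?thesis using fv by simp
    next
      case False
      then have "u \<in> Poly_Mapping.keys (a - Poly_Mapping.single v 1 + Poly_Mapping.single (nv l v) 1)"
        using u by (simp add: in_keys_iff lookup_D)
      then show ?thesis using h by (auto simp: tf_def)
    qed
  qed
next
  assume h: "tf n a"
  have fv: "fst v \<noteq> n" using h assms by (auto simp: tf_def)
  show "tf n (a - Poly_Mapping.single v 1 + Poly_Mapping.single (nv l v) 1)" unfolding tf_def
  proof
    fix u assume u: "u \<in> Poly_Mapping.keys (a - Poly_Mapping.single v 1 + Poly_Mapping.single (nv l v) 1)"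
    show "fst u \<noteq> n"
    proof (cases "u = nv l v")
      case True then show ?thesis using fv by simp
    next
      case False
      then have "u \<in> Poly_Mapping.keys a" using u by (auto simp: in_keys_iff lookup_D split: if_splits)
      then show ?thesis using h by (auto simp: tf_def)
    qed
  qed
qed

lemma t1_dterm:
  assumes "v \<in> Poly_Mapping.keys a"
  shows "t1 n (a - Poly_Mapping.single v 1 + Poly_Mapping.single (nv l v) 1) \<longleftrightarrow> t1 n a \<and> fst v \<noteq> n"
proof
  assume h: "t1 n (a - Poly_Mapping.single v 1 + Poly_Mapping.single (nv l v) 1)"
  have "nv l v \<in> Poly_Mapping.keys (a - Poly_Mapping.single v 1 + Poly_Mapping.single (nv l v) 1)"
    by (simp add: in_keys_iff lookup_D)
  then have fv: "fst v \<noteq> n" using h nv_ne[of l v n] unfolding t1_def by (metis fst_nv)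
  then have vn: "v \<noteq> (n,0)" by auto
  have "Poly_Mapping.lookup a (n,0) = 1" using h vn nv_ne[of l v n] unfolding t1_def by (simp add: lookup_D)
  moreover have "\<forall>u\<in>Poly_Mapping.keys a. fst u = n \<longrightarrow> u = (n, 0)"
  proof (intro ballI impI)
    fix u assume u: "u \<in> Poly_Mapping.keys a" "fst u = n"
    then have "u \<noteq> v" using fv by auto
    then have "u \<in> Poly_Mapping.keys (a - Poly_Mapping.single v 1 + Poly_Mapping.single (nv l v) 1)"
      using u by (simp add: in_keys_iff lookup_D)
    then show "u = (n,0)" using h u unfolding t1_def by blast
  qed
  ultimately show "t1 n a \<and> fst v \<noteq> n" using fv by (simp add: t1_def)
next
  assume h: "t1 n a \<and> fst v \<noteq> n"
  then have vn: "v \<noteq> (n,0)" by auto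
  have "Poly_Mapping.lookup (a - Poly_Mapping.single v 1 + Poly_Mapping.single (nv l v) 1) (n,0) = 1"
    using h vn nv_ne[of l v n] unfolding t1_def by (simp add: lookup_D)
  moreover have "\<forall>u\<in>Poly_Mapping.keys (a - Poly_Mapping.single v 1 + Poly_Mapping.single (nv l v) 1). fst u = n \<longrightarrow> u = (n, 0)"
  proof (intro ballI impI)
    fix u assume u: "u \<in> Poly_Mapping.keys (a - Poly_Mapping.single v 1 + Poly_Mapping.single (nv l v) 1)" "fst u = n"
    then have "u \<noteq> nv l v" using h by auto
    then have "u \<in> Poly_Mapping.keys a" using u by (auto simp: in_keys_iff lookup_D split: if_splits)
    then show "u = (n,0)" using h u unfolding t1_def by blast
  qed
  ultimately show "t1 n (a - Poly_Mapping.single v 1 + Poly_Mapping.single (nv l v) 1)" by (simp add: t1_def)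
qed

lemma Eop_dderiv_single: "Eop n (dderiv l (Poly_Mapping.single a c :: 'a::comm_ring_1 dpoly)) = dderiv l (Eop n (Poly_Mapping.single a c))"
proof -
  have "Eop n (dderiv l (Poly_Mapping.single a c :: 'a dpoly)) =
     (\<Sum>v\<in>Poly_Mapping.keys a. if tf n a then Poly_Mapping.single (a - Poly_Mapping.single v 1 + Poly_Mapping.single (nv l v) 1) (c * of_nat (Poly_Mapping.lookup a v)) else 0)"
    unfolding dderiv_single
    by (subst additive_sum[where L="Eop n"]) (auto simp: Eop_add Eop_single tf_dterm tf_dterm[simplified] intro!: sum.cong)
  then show ?thesis by (simp add: Eop_single dderiv_single)
qed

lemma Eop_dderiv: "Eop n (dderiv l p :: 'a::comm_ring_1 dpoly) = dderiv l (Eop n p)"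
  by (induction p rule: poly_induct) (simp_all add: Eop_dderiv_single dderiv_add Eop_add)

lemma Cop_dderiv_single: "Cop n (dderiv l (Poly_Mapping.single a c :: 'a::comm_ring_1 dpoly)) = dderiv l (Cop n (Poly_Mapping.single a c))"
proof -
  have L: "Cop n (dderiv l (Poly_Mapping.single a c :: 'a dpoly)) =
     (\<Sum>v\<in>Poly_Mapping.keys a. if t1 n a \<and> fst v \<noteq> n then Poly_Mapping.single (a - Poly_Mapping.single v 1 + Poly_Mapping.single (nv l v) 1 - T n) (c * of_nat (Poly_Mapping.lookup a v)) else 0)"
    unfolding dderiv_single
    by (subst additive_sum[where L="Cop n"]) (auto simp: Cop_add Cop_single t1_dterm t1_dterm[simplified] intro!: sum.cong)
  show ?thesis
  proof (cases "t1 n a")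
    case False
    then show ?thesis using L by (simp add: Cop_single)
  next
    case True
    have a1: "Poly_Mapping.lookup a (n,0) = 1" using True by (simp add: t1_def)
    then have nk: "(n,0) \<in> Poly_Mapping.keys a" by (simp add: in_keys_iff)
    have K: "Poly_Mapping.keys (a - T n) = Poly_Mapping.keys a - {(n,0)}"
    proof (intro set_eqI iffI)
      fix x assume "x \<in> Poly_Mapping.keys (a - T n)"
      then show "x \<in> Poly_Mapping.keys a - {(n,0)}" using a1
        by (cases "x = (n,0)") (auto simp: in_keys_iff lookup_minus lookup_single)
    next
      fix x assume "x \<in> Poly_Mapping.keys a - {(n,0)}"
      then show "x \<in> Poly_Mapping.keys (a - T n)"
        by (auto simp: in_keys_iff lookup_minus lookup_single)
    qed
    have "Cop n (dderiv l (Poly_Mapping.single a c :: 'a dpoly)) =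
      (\<Sum>v\<in>Poly_Mapping.keys a - {(n,0)}. if t1 n a \<and> fst v \<noteq> n then Poly_Mapping.single (a - Poly_Mapping.single v 1 + Poly_Mapping.single (nv l v) 1 - T n) (c * of_nat (Poly_Mapping.lookup a v)) else 0)"
      unfolding L by (subst sum.remove[OF finite_keys nk]) simp
    also have "\<dots> = (\<Sum>v\<in>Poly_Mapping.keys (a - T n). Poly_Mapping.single ((a - T n) - Poly_Mapping.single v 1 + Poly_Mapping.single (nv l v) 1) (c * of_nat (Poly_Mapping.lookup (a - T n) v)))"
      unfolding K
    proof (rule sum.cong[OF refl])
      fix v assume v: "v \<in> Poly_Mapping.keys a - {(n,0)}"
      then have fv: "fst v \<noteq> n" using True unfolding t1_def by (metis DiffE insertI1 prod.collapse)
      have e: "a - Poly_Mapping.single v 1 + Poly_Mapping.single (nv l v) 1 - T n = (a - T n) - Poly_Mapping.single v 1 + Poly_Mapping.single (nv l v) 1"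
        using v a1 nv_ne[of l v n]
        by (intro poly_mapping_eqI) (auto simp: lookup_add lookup_minus lookup_single when_def in_keys_iff)
      have e2: "Poly_Mapping.lookup (a - T n) v = Poly_Mapping.lookup a v"
        using v by (auto simp: lookup_minus lookup_single when_def)
      show "(if t1 n a \<and> fst v \<noteq> n then Poly_Mapping.single (a - Poly_Mapping.single v 1 + Poly_Mapping.single (nv l v) 1 - T n) (c * of_nat (Poly_Mapping.lookup a v)) else 0) =
        Poly_Mapping.single ((a - T n) - Poly_Mapping.single v 1 + Poly_Mapping.single (nv l v) 1) (c * of_nat (Poly_Mapping.lookup (a - T n) v))"
        using True fv e e2 by simp
    qed
    also have "\<dots> = dderiv l (Cop n (Poly_Mapping.single a c))"
      using True by (simp add: Cop_single dderiv_single)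
    finally show ?thesis .
  qed
qed

lemma Cop_dderiv: "Cop n (dderiv l p :: 'a::comm_ring_1 dpoly) = dderiv l (Cop n p)"
  by (induction p rule: poly_induct) (simp_all add: Cop_dderiv_single dderiv_add Cop_add)


definition good :: "nat \<Rightarrow> nat \<Rightarrow> (dvar \<Rightarrow>\<^sub>0 nat) \<Rightarrow> bool" where
  "good m k mon = (\<forall>v\<in>Poly_Mapping.keys mon. fst v < k \<and> Poly_Mapping.keys (snd v) \<subseteq> {..<m})"

lemma dring_good: "dring m k = {p. \<forall>mon\<in>Poly_Mapping.keys p. good m k mon}"
  by (simp add: dring_def good_def)

lemma dring_add: "p \<in> dring m k \<Longrightarrow> q \<in> dring m k \<Longrightarrow> p + q \<in> dring m k"
  unfolding dring_good using keys_add[of p q] by auto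

lemma dring_zero: "0 \<in> dring m k" by (simp add: dring_good)

lemma good_add: "good m k a \<Longrightarrow> good m k b \<Longrightarrow> good m k (a + b)"
  unfolding good_def keys_add_nat by blast

lemma dring_mult: "p \<in> dring m k \<Longrightarrow> q \<in> dring m k \<Longrightarrow> p * q \<in> dring m k"
proof -
  assume p: "p \<in> dring m k" and q: "q \<in> dring m k"
  show "p * q \<in> dring m k" unfolding dring_good
  proof (intro CollectI ballI)
    fix mon assume "mon \<in> Poly_Mapping.keys (p * q)"
    then obtain a b where "mon = a + b" "a \<in> Poly_Mapping.keys p" "b \<in> Poly_Mapping.keys q"
      using keys_mult[of p q] by auto
    then show "good m k mon" using p q good_add by (auto simp: dring_good)
  qed
qed

lemma dring_single: "good m k a \<Longrightarrow> Poly_Mapping.single a c \<in> dring m k"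
  by (simp add: dring_good)

lemma dring_sum: "(\<And>i. i \<in> K \<Longrightarrow> f i \<in> dring m k) \<Longrightarrow> sum f K \<in> dring m k"
  by (induction K rule: infinite_finite_induct) (auto intro: dring_add dring_zero)

lemma good_D:
  assumes "good m k a" "v \<in> Poly_Mapping.keys a" "l < m"
  shows "good m k (a - Poly_Mapping.single v 1 + Poly_Mapping.single (nv l v) 1)"
  unfolding good_def
proof
  fix u assume u: "u \<in> Poly_Mapping.keys (a - Poly_Mapping.single v 1 + Poly_Mapping.single (nv l v) 1)"
  show "fst u < k \<and> Poly_Mapping.keys (snd u) \<subseteq> {..<m}"
  proof (cases "u = nv l v")
    case True
    have "Poly_Mapping.keys (snd v + Poly_Mapping.single l 1) \<subseteq> Poly_Mapping.keys (snd v) \<union> {l}"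
      using keys_add[of "snd v" "Poly_Mapping.single l 1"] by simp
    then show ?thesis using True assms unfolding good_def nv_def by auto
  next
    case False
    then have "u \<in> Poly_Mapping.keys a" using u by (auto simp: in_keys_iff lookup_D split: if_splits)
    then show ?thesis using assms unfolding good_def by auto
  qed
qed

lemma dring_dderiv: assumes "p \<in> dring m k" "l < m" shows "dderiv l p \<in> dring m k"
proof -
  have "dderiv l p = (\<Sum>mon\<in>Poly_Mapping.keys p. dderiv l (Poly_Mapping.single mon (Poly_Mapping.lookup p mon)))"
    by (subst sum_single) (rule additive_sum, simp_all add: dderiv_add)
  also have "\<dots> \<in> dring m k"
    using assms unfolding dderiv_single
    by (intro dring_sum dring_single good_D) (auto simp: dring_good)
  finally show ?thesis .
qed

lemma good_tf: "good m n a \<Longrightarrow> tf n a" by (auto simp: good_def tf_def)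

lemma Eop_dring: "g \<in> dring m n \<Longrightarrow> Eop n g = g"
proof -
  assume g: "g \<in> dring m n"
  have "Eop n g = (\<Sum>mon\<in>Poly_Mapping.keys g. Eop n (Poly_Mapping.single mon (Poly_Mapping.lookup g mon)))"
    by (subst sum_single) (rule additive_sum, simp_all add: Eop_add)
  also have "\<dots> = (\<Sum>mon\<in>Poly_Mapping.keys g. Poly_Mapping.single mon (Poly_Mapping.lookup g mon))"
    using g by (intro sum.cong) (auto simp: Eop_single dring_good good_tf)
  finally show ?thesis using sum_single[of g] by simp
qed

lemma Cop_dring: "g \<in> dring m n \<Longrightarrow> Cop n g = 0"
proof -
  assume g: "g \<in> dring m n"
  have "Cop n g = (\<Sum>mon\<in>Poly_Mapping.keys g. Cop n (Poly_Mapping.single mon (Poly_Mapping.lookup g mon)))"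
    by (subst sum_single) (rule additive_sum, simp_all add: Cop_add)
  also have "\<dots> = 0"
  proof (intro sum.neutral ballI)
    fix mon assume "mon \<in> Poly_Mapping.keys g"
    then have "tf n mon" using g good_tf by (auto simp: dring_good)
    then have "\<not> t1 n mon" using t1_tf by blast
    then show "Cop n (Poly_Mapping.single mon (Poly_Mapping.lookup g mon)) = 0" by (simp add: Cop_single)
  qed
  finally show ?thesis .
qed

lemma ideal_dring: assumes "set fs \<subseteq> dring m n" "a \<in> diff_ideal m n (set fs)" shows "a \<in> dring m n"
  using assms(2)
proof (induction rule: diff_ideal.induct)
  case (gen f) then show ?case using assms(1) by blast
next
  case zero then show ?case by (rule dring_zero)
next
  case (add a b) then show ?case by (simp add: dring_add)
next
  case (mult a r) then show ?case by (simp add: dring_mult)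
next
  case (deriv a l) then show ?case by (simp add: dring_dderiv)
qed


lemma dX_single: "dX i \<theta> = Poly_Mapping.single (Poly_Mapping.single (i, \<theta>) 1) 1"
  by (simp add: dX_def)

lemma Cop_dX_other: "i \<noteq> n \<Longrightarrow> Cop n (dX i \<theta>) = 0"
  by (simp add: dX_def Cop_single t1_def lookup_single)
lemma Eop_dX_other: "i \<noteq> n \<Longrightarrow> Eop n (dX i \<theta>) = dX i \<theta>"
  by (simp add: dX_def Eop_single tf_def)
lemma Cop_dX_n: "Cop n (dX n \<theta> :: 'a::comm_ring_1 dpoly) = (if \<theta> = 0 then 1 else 0)"
  by (simp add: dX_def Cop_single t1_def lookup_single)
lemma Eop_dX_n: "Eop n (dX n \<theta>) = 0"
  by (simp add: dX_def Eop_single tf_def)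
lemma Cop_dconst: "Cop n (dconst c) = 0"
  by (simp add: dconst_def Cop_single t1_def)
lemma Eop_dconst: "Eop n (dconst c) = dconst c"
  by (simp add: dconst_def Eop_single tf_def)
lemma dconst_dring: "dconst c \<in> dring m k"
  by (simp add: dconst_def dring_single good_def)
lemma dX_dring: "i < k \<Longrightarrow> dX i 0 \<in> dring m k"
  by (simp add: dX_def dring_single good_def)

lemma backward_inv:
  assumes F: "set fs \<subseteq> dring m n"
    and p: "p \<in> diff_subalg m ({dX i 0 | i. i < n} \<union> {dX n (Poly_Mapping.single l 1) | l. l < m}
             \<union> {dX n 0 * g | g. g \<in> set fs})"
  shows "Cop n p \<in> diff_ideal m n (set fs) \<and> Eop n p \<in> dring m n"
  using p
proof (induction rule: diff_subalg.induct)
  case (gen g)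
  then consider (x) i where "g = dX i 0" "i < n" | (d) l where "g = dX n (Poly_Mapping.single l 1)"
    | (t) h where "g = dX n 0 * h" "h \<in> set fs" by blast
  then show ?case
  proof cases
    case x then show ?thesis by (simp add: Cop_dX_other Eop_dX_other dX_dring diff_ideal.zero)
  next
    case d
    have "Poly_Mapping.single l (1::nat) \<noteq> 0" by (metis lookup_single_eq lookup_zero one_neq_zero)
    then show ?thesis using d by (simp add: Cop_dX_n Eop_dX_n dring_zero diff_ideal.zero)
  next
    case t
    have hd: "h \<in> dring m n" using t F by blast
    show ?thesis using t hd
      by (simp add: Cop_mult Eop_mult Cop_dX_n Eop_dX_n Eop_dring dring_zero diff_ideal.gen)
  qed
next
  case (const c) then show ?case by (simp add: Cop_dconst Eop_dconst dconst_dring diff_ideal.zero)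
next
  case (add a b) then show ?case by (simp add: Cop_add Eop_add dring_add diff_ideal.add)
next
  case (mult a b) then show ?case
    by (simp add: Cop_mult Eop_mult dring_mult diff_ideal.add diff_ideal.mult)
next
  case (deriv a l) then show ?case
    by (simp add: Cop_dderiv Eop_dderiv dring_dderiv diff_ideal.deriv)
qed

lemma backward:
  assumes F: "set fs \<subseteq> dring m n" and f: "f \<in> dring m n"
    and p: "dX n 0 * f \<in> diff_subalg m ({dX i 0 | i. i < n} \<union> {dX n (Poly_Mapping.single l 1) | l. l < m}
             \<union> {dX n 0 * g | g. g \<in> set fs})"
  shows "f \<in> diff_ideal m n (set fs)"
proof -
  have "Cop n (dX n 0 * f) \<in> diff_ideal m n (set fs)" using backward_inv[OF F p] by blast
  then show ?thesis using f by (simp add: Cop_mult Cop_dX_n Eop_dX_n Eop_dring)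
qed


lemma S_zero: "0 \<in> diff_subalg m G"
  using diff_subalg.const[of 0 m G] by (simp add: dconst_def)

lemma S_neg: "p \<in> diff_subalg m G \<Longrightarrow> - p \<in> diff_subalg m G"
proof -
  assume "p \<in> diff_subalg m G"
  then have "dconst (-1) * p \<in> diff_subalg m G" by (intro diff_subalg.mult diff_subalg.const)
  moreover have "dconst (-1) * p = - p" by (simp add: dconst_def single_uminus)
  ultimately show ?thesis by simp
qed

lemma S_sum: "(\<And>i. i \<in> K \<Longrightarrow> f i \<in> diff_subalg m G) \<Longrightarrow> sum f K \<in> diff_subalg m G"
  by (induction K rule: infinite_finite_induct) (auto intro: diff_subalg.add S_zero)

lemma S_pow: "p \<in> diff_subalg m G \<Longrightarrow> p ^ k \<in> diff_subalg m G"
proof (induction k)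
  case 0
  have "dconst 1 \<in> diff_subalg m G" by (rule diff_subalg.const)
  then show ?case by (simp add: dconst_def)
next
  case (Suc k) then show ?case by (simp add: diff_subalg.mult)
qed

lemma dderiv_dX: "dderiv l (dX i \<theta> :: 'a::comm_ring_1 dpoly) = dX i (\<theta> + Poly_Mapping.single l 1)"
  by (simp add: dX_def dderiv_single nv_def)

lemma update_add: "a \<notin> Poly_Mapping.keys f \<Longrightarrow> Poly_Mapping.update a b f = f + Poly_Mapping.single a b"
  by (intro poly_mapping_eqI) (auto simp: lookup_update lookup_add lookup_single in_keys_iff when_def)

lemma dX_S:
  assumes base: "dX i 0 \<in> diff_subalg m G"
  shows "Poly_Mapping.keys \<theta> \<subseteq> {..<m} \<Longrightarrow> (dX i \<theta> :: 'a::comm_ring_1 dpoly) \<in> diff_subalg m G"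
proof (induction \<theta> rule: update_induct)
  case const then show ?case using base by simp
next
  case (update f a b)
  have ks: "Poly_Mapping.keys (Poly_Mapping.update a b f) = insert a (Poly_Mapping.keys f)"
    using update by (simp add: keys_update)
  then have am: "a < m" and fk: "Poly_Mapping.keys f \<subseteq> {..<m}" using update by auto
  have "(dX i (f + Poly_Mapping.single a k) :: 'a dpoly) \<in> diff_subalg m G" for k
  proof (induction k)
    case 0 then show ?case using update fk by simp
  next
    case (Suc k)
    have "dderiv a (dX i (f + Poly_Mapping.single a k) :: 'a dpoly) \<in> diff_subalg m G"
      using Suc am by (rule diff_subalg.deriv)
    moreover have "f + Poly_Mapping.single a k + Poly_Mapping.single a 1 = f + Poly_Mapping.single a (Suc k)"
      by (simp add: single_add[symmetric] add.assoc)
    ultimately show ?case by (simp add: dderiv_dX)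
  qed
  then show ?case using update by (simp add: update_add)
qed

lemma mono_S:
  assumes base: "\<And>i. i < n \<Longrightarrow> dX i 0 \<in> diff_subalg m G"
  shows "good m n mon \<Longrightarrow> (Poly_Mapping.single mon 1 :: 'a::comm_ring_1 dpoly) \<in> diff_subalg m G"
proof (induction mon rule: update_induct)
  case const
  have "dconst 1 \<in> diff_subalg m G" by (rule diff_subalg.const)
  then show ?case by (simp add: dconst_def)
next
  case (update f a b)
  have ks: "Poly_Mapping.keys (Poly_Mapping.update a b f) = insert a (Poly_Mapping.keys f)"
    using update by (simp add: keys_update)
  then have ga: "fst a < n" "Poly_Mapping.keys (snd a) \<subseteq> {..<m}" and gf: "good m n f"
    using update by (auto simp: good_def)
  have X: "(dX (fst a) (snd a) :: 'a dpoly) \<in> diff_subalg m G"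
    using dX_S[OF base[OF ga(1)] ga(2)] by simp
  have pw: "(Poly_Mapping.single (Poly_Mapping.single a k) 1 :: 'a dpoly) = dX (fst a) (snd a) ^ k" for k
  proof (induction k)
    case 0 then show ?case by simp
  next
    case (Suc k)
    have "(Poly_Mapping.single (Poly_Mapping.single a (Suc k)) 1 :: 'a dpoly)
       = Poly_Mapping.single (Poly_Mapping.single a 1) 1 * Poly_Mapping.single (Poly_Mapping.single a k) 1"
      by (simp add: mult_single single_add[symmetric])
    then show ?case using Suc by (simp add: dX_def)
  qed
  have "(Poly_Mapping.single (f + Poly_Mapping.single a b) 1 :: 'a dpoly)
      = Poly_Mapping.single f 1 * Poly_Mapping.single (Poly_Mapping.single a b) 1"
    by (simp add: mult_single)
  then show ?case using update gf X
    by (simp add: update_add pw diff_subalg.mult S_pow)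
qed

lemma dring_S:
  assumes base: "\<And>i. i < n \<Longrightarrow> dX i 0 \<in> diff_subalg m G" and p: "p \<in> dring m n"
  shows "(p :: 'a::comm_ring_1 dpoly) \<in> diff_subalg m G"
proof -
  have "(\<Sum>mon\<in>Poly_Mapping.keys p. Poly_Mapping.single mon (Poly_Mapping.lookup p mon)) \<in> diff_subalg m G"
  proof (rule S_sum)
    fix mon assume "mon \<in> Poly_Mapping.keys p"
    then have g: "good m n mon" using p by (auto simp: dring_good)
    have "dconst (Poly_Mapping.lookup p mon) * Poly_Mapping.single mon 1 \<in> diff_subalg m G"
      by (intro diff_subalg.mult diff_subalg.const mono_S[OF base g])
    then show "Poly_Mapping.single mon (Poly_Mapping.lookup p mon) \<in> diff_subalg m G"
      by (simp add: dconst_def mult_single)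
  qed
  then show ?thesis using sum_single[of p] by simp
qed


lemma forward:
  fixes fs :: "'a::comm_ring_1 dpoly list"
  assumes F: "set fs \<subseteq> dring m n" and f: "f \<in> diff_ideal m n (set fs)"
  shows "dX n 0 * f \<in> diff_subalg m ({dX i 0 | i. i < n} \<union> {dX n (Poly_Mapping.single l 1) | l. l < m}
             \<union> {dX n 0 * g | g. g \<in> set fs})" (is "_ \<in> ?S")
  using f
proof (induction rule: diff_ideal.induct)
  case (gen g) then show ?case by (intro diff_subalg.gen) blast
next
  case zero then show ?case by (simp add: S_zero)
next
  case (add a b) then show ?case by (simp add: distrib_left diff_subalg.add)
next
  case (mult a r)
  have base: "\<And>i. i < n \<Longrightarrow> dX i 0 \<in> ?S" by (intro diff_subalg.gen) blast
  have "r * (dX n 0 * a) \<in> ?S" by (rule diff_subalg.mult[OF dring_S[OF base mult.hyps(2)] mult.IH])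
  then show ?case by (simp add: ac_simps)
next
  case (deriv a l)
  have base: "\<And>i. i < n \<Longrightarrow> dX i 0 \<in> ?S" by (intro diff_subalg.gen) blast
  have ad: "a \<in> dring m n" using ideal_dring[OF F deriv.hyps(1)] .
  have dt: "dX n (Poly_Mapping.single l 1) \<in> ?S" using deriv.hyps(2) by (intro diff_subalg.gen) blast
  have "dderiv l (dX n 0 * a) + - (dX n (Poly_Mapping.single l 1) * a) \<in> ?S"
    by (rule diff_subalg.add[OF diff_subalg.deriv[OF deriv.IH deriv.hyps(2)] S_neg[OF diff_subalg.mult[OF dt dring_S[OF base ad]]]])
  moreover have "dderiv l (dX n 0 * a) + - (dX n (Poly_Mapping.single l 1) * a) = dX n 0 * dderiv l a"
    by (simp add: leibniz dderiv_dX)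
  ultimately show ?case by simp
qed

theorem proposition2:
  fixes m n :: nat and fs :: "'a::comm_ring_1 dpoly list" and f :: "'a dpoly"
  assumes "set fs \<subseteq> dring m n"
    and "f \<in> dring m n"
  shows "f \<in> diff_ideal m n (set fs) \<longleftrightarrow>
         dX n 0 * f \<in> diff_subalg m
            ({dX i 0 | i. i < n} \<union> {dX n (Poly_Mapping.single l 1) | l. l < m}
             \<union> {dX n 0 * g | g. g \<in> set fs})"
  using forward[OF assms(1)] backward[OF assms] by blast

end
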